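(* Let $G$ be a finite group acting principally on $X$ and $n\ge 2$. Then the sectional category of $\tilde\epsilon_n : M^{G,n}(X)\to X^n$, $(\alpha_1,\ldots,\alpha_n)\mapsto(\alpha_1(1),\ldots,\alpha_n(1))$, equals $\mathsf{TC}^G_{\mathsf{effv},n}(X)$.
   Context: All spaces are Hausdorff, path-connected and locally path-connected; $G$ acts on the right. $PX$ is the path space with compact-open topology. $M^G_n(X)$ is the subspace of $PX\times G\times\cdots\times G\times PX$ ($n$ path factors, $n-1$ group factors) of tuples $(\alpha_1,g_1,\ldots,g_{n-1},\alpha_n)$ with $\alpha_i(0)g_i=\alpha_{i+1}(0)$; $\epsilon_n:M^G_n(X)\to X^n$ sends such a tuple to $(\alpha_1(1),\ldots,\alpha_n(1))$, and $\mathsf{TC}^G_{\mathsf{effv},n}(X)$ is the (non-reduced) sectional category of $\epsilon_n$, i.e. the least number of open sets covering $X^n$ each admitting a continuous local section. $M^{G,n}(X)=\{(\alpha_1,\ldots,\alpha_n)\in(PX)^n:\alpha_i(0)G=\alpha_j(0)G\}$. The action is principal if it is free and $(x,xg)\mapsto g$ is continuous on $\{(x,xg)\}$. *)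

theory Defs
  imports "HOL-Analysis.Analysis" "HOL-Algebra.Group"
begin

definition has_local_section ::
  "'e topology \<Rightarrow> 'b topology \<Rightarrow> ('e \<Rightarrow> 'b) \<Rightarrow> 'b set \<Rightarrow> bool" where
  "has_local_section E B p U \<longleftrightarrow>
     (\<exists>s. continuous_map (subtopology B U) E s \<and> (\<forall>b\<in>U. p (s b) = b))"

text \<open>Least number k of open sets covering the base, each admitting a continuous
  local section; infinity if no finite such cover exists.\<close>
definition secat :: "'e topology \<Rightarrow> 'b topology \<Rightarrow> ('e \<Rightarrow> 'b) \<Rightarrow> enat" where
  "secat E B p = Inf {enat k | k. \<exists>U :: nat \<Rightarrow> 'b set.
      (\<forall>i<k. openin B (U i) \<and> has_local_section E B p (U i)) \<and>
      topspace B \<subseteq> (\<Union>i<k. U i)}"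

definition paths :: "'a topology \<Rightarrow> (real \<Rightarrow> 'a) set" where
  "paths X = {\<alpha>. pathin X \<alpha> \<and> (\<forall>t. t \<notin> {0..1} \<longrightarrow> \<alpha> t = undefined)}"

definition path_space :: "'a topology \<Rightarrow> (real \<Rightarrow> 'a) topology" where
  "path_space X = subtopology
     (topology_generated_by
        {{\<alpha>. \<alpha> ` K \<subseteq> V} | K V. compactin (top_of_set {0..1}) K \<and> openin X V})
     (paths X)"

text \<open>A (continuous) right action of the finite (hence discrete) group G on X.\<close>
definition right_action ::
  "'a topology \<Rightarrow> ('g, 'm) monoid_scheme \<Rightarrow> ('a \<Rightarrow> 'g \<Rightarrow> 'a) \<Rightarrow> bool" where
  "right_action X G \<phi> \<longleftrightarrow>
     continuous_map (prod_topology X (discrete_topology (carrier G))) X (\<lambda>(x, g). \<phi> x g) \<and>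
     (\<forall>x\<in>topspace X. \<phi> x \<one>\<^bsub>G\<^esub> = x) \<and>
     (\<forall>x\<in>topspace X. \<forall>g\<in>carrier G. \<forall>h\<in>carrier G. \<phi> (\<phi> x g) h = \<phi> x (g \<otimes>\<^bsub>G\<^esub> h))"

definition principal_action ::
  "'a topology \<Rightarrow> ('g, 'm) monoid_scheme \<Rightarrow> ('a \<Rightarrow> 'g \<Rightarrow> 'a) \<Rightarrow> bool" where
  "principal_action X G \<phi> \<longleftrightarrow>
     (\<forall>x\<in>topspace X. \<forall>g\<in>carrier G. \<phi> x g = x \<longrightarrow> g = \<one>\<^bsub>G\<^esub>) \<and>
     continuous_map
       (subtopology (prod_topology X X) {(x, \<phi> x g) | x g. x \<in> topspace X \<and> g \<in> carrier G})
       (discrete_topology (carrier G))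
       (\<lambda>(x, y). THE g. g \<in> carrier G \<and> \<phi> x g = y)"

definition orbit :: "('g, 'm) monoid_scheme \<Rightarrow> ('a \<Rightarrow> 'g \<Rightarrow> 'a) \<Rightarrow> 'a \<Rightarrow> 'a set" where
  "orbit G \<phi> x = (\<phi> x) ` carrier G"

definition power_space :: "'a topology \<Rightarrow> nat \<Rightarrow> (nat \<Rightarrow> 'a) topology" where
  "power_space X n = product_topology (\<lambda>_. X) {..<n}"

text \<open>Tuples (alpha_1,g_1,...,g_{n-1},alpha_n) encoded as (alpha, g) with alpha indexed by
  {0..<n} and g indexed by {0..<n-1}; condition alpha_i(0) g_i = alpha_{i+1}(0).\<close>
definition MG_space :: "'a topology \<Rightarrow> ('g, 'm) monoid_scheme \<Rightarrow> ('a \<Rightarrow> 'g \<Rightarrow> 'a) \<Rightarrow> nat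
    \<Rightarrow> ((nat \<Rightarrow> real \<Rightarrow> 'a) \<times> (nat \<Rightarrow> 'g)) topology" where
  "MG_space X G \<phi> n = subtopology
     (prod_topology (product_topology (\<lambda>_. path_space X) {..<n})
                    (product_topology (\<lambda>_. discrete_topology (carrier G)) {..<n - 1}))
     {(\<alpha>, g). \<forall>i < n - 1. \<phi> (\<alpha> i 0) (g i) = \<alpha> (Suc i) 0}"

definition eps :: "nat \<Rightarrow> (nat \<Rightarrow> real \<Rightarrow> 'a) \<times> (nat \<Rightarrow> 'g) \<Rightarrow> (nat \<Rightarrow> 'a)" where
  "eps n = (\<lambda>(\<alpha>, g). (\<lambda>i\<in>{..<n}. \<alpha> i 1))"

definition TC_effv :: "'a topology \<Rightarrow> ('g, 'm) monoid_scheme \<Rightarrow> ('a \<Rightarrow> 'g \<Rightarrow> 'a) \<Rightarrow> nat \<Rightarrow> enat" where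
  "TC_effv X G \<phi> n = secat (MG_space X G \<phi> n) (power_space X n) (eps n)"

definition MGn_space :: "'a topology \<Rightarrow> ('g, 'm) monoid_scheme \<Rightarrow> ('a \<Rightarrow> 'g \<Rightarrow> 'a) \<Rightarrow> nat
    \<Rightarrow> (nat \<Rightarrow> real \<Rightarrow> 'a) topology" where
  "MGn_space X G \<phi> n = subtopology
     (product_topology (\<lambda>_. path_space X) {..<n})
     {\<alpha>. \<forall>i<n. \<forall>j<n. orbit G \<phi> (\<alpha> i 0) = orbit G \<phi> (\<alpha> j 0)}"

definition eps_tilde :: "nat \<Rightarrow> (nat \<Rightarrow> real \<Rightarrow> 'a) \<Rightarrow> (nat \<Rightarrow> 'a)" where
  "eps_tilde n = (\<lambda>\<alpha>. (\<lambda>i\<in>{..<n}. \<alpha> i 1))"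

end

theory Submission
  imports Defs
begin

lemma topspace_path_space: "topspace (path_space X) = paths X"
proof -
  have "UNIV \<in> {{\<alpha>::real\<Rightarrow>'a. \<alpha> ` K \<subseteq> V} | K V. compactin (top_of_set {0..1}) K \<and> openin X V}"
    by (rule CollectI, rule exI[of _ "{}"], rule exI[of _ "{}"]) auto
  then show ?thesis unfolding path_space_def by auto
qed

lemma paths_in_topspace: "\<alpha> \<in> paths X \<Longrightarrow> t \<in> {0..1} \<Longrightarrow> \<alpha> t \<in> topspace X"
  unfolding paths_def pathin_def continuous_map_def by auto

lemma continuous_map_eval:
  assumes t: "t \<in> {0..1}"
  shows "continuous_map (path_space X) X (\<lambda>\<alpha>. \<alpha> t)"
  unfolding continuous_map_def
proof (intro conjI allI impI)
  show "(\<lambda>\<alpha>. \<alpha> t) \<in> topspace (path_space X) \<rightarrow> topspace X"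
    using paths_in_topspace t by (auto simp: topspace_path_space)
  fix V assume V: "openin X V"
  let ?S = "{{\<alpha>::real\<Rightarrow>'a. \<alpha> ` K \<subseteq> V} | K V. compactin (top_of_set {0..1}) K \<and> openin X V}"
  have "{\<alpha>. \<alpha> ` {t} \<subseteq> V} \<in> ?S"
    using V t by (intro CollectI exI[of _ "{t}"] exI[of _ V]) auto
  then have "openin (topology_generated_by ?S) {\<alpha>. \<alpha> ` {t} \<subseteq> V}"
    by (simp add: openin_topology_generated_by_iff generate_topology_on.Basis)
  then have "openin (path_space X) ({\<alpha>. \<alpha> ` {t} \<subseteq> V} \<inter> paths X)"
    unfolding path_space_def by (rule openin_subtopology_Int)
  moreover have "{\<alpha>. \<alpha> ` {t} \<subseteq> V} \<inter> paths X = {x \<in> topspace (path_space X). x t \<in> V}"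
    by (auto simp: topspace_path_space)
  ultimately show "openin (path_space X) {x \<in> topspace (path_space X). x t \<in> V}" by simp
qed

lemma orbit_act:
  assumes "group G" "right_action X G \<phi>" "x \<in> topspace X" "g \<in> carrier G"
  shows "orbit G \<phi> (\<phi> x g) = orbit G \<phi> x"
proof -
  have act: "\<And>h. h \<in> carrier G \<Longrightarrow> \<phi> (\<phi> x g) h = \<phi> x (g \<otimes>\<^bsub>G\<^esub> h)"
    using assms(2,3,4) unfolding right_action_def by auto
  show ?thesis unfolding orbit_def
  proof
    show "\<phi> (\<phi> x g) ` carrier G \<subseteq> \<phi> x ` carrier G" using act assms(1,4) by (auto intro!: imageI monoid.m_closed group.is_monoid)
    show "\<phi> x ` carrier G \<subseteq> \<phi> (\<phi> x g) ` carrier G"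
    proof
      fix y assume "y \<in> \<phi> x ` carrier G"
      then obtain h where h: "h \<in> carrier G" "y = \<phi> x h" by auto
      have cl: "inv\<^bsub>G\<^esub> g \<otimes>\<^bsub>G\<^esub> h \<in> carrier G" using h assms(1,4) by (simp add: group.inv_closed group.subgroup_self subgroup.m_closed)
      have "g \<otimes>\<^bsub>G\<^esub> (inv\<^bsub>G\<^esub> g \<otimes>\<^bsub>G\<^esub> h) = h" using group.inv_solve_left[OF assms(1) cl assms(4) h(1)] by simp
      with cl show "y \<in> \<phi> (\<phi> x g) ` carrier G" using act h by (metis image_eqI)
    qed
  qed
qed

lemma act_unique:
  assumes "group G" "right_action X G \<phi>" "principal_action X G \<phi>"
    "x \<in> topspace X" "g \<in> carrier G" "h \<in> carrier G" "\<phi> x g = \<phi> x h"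
  shows "g = h"
proof -
  have ih: "inv\<^bsub>G\<^esub> h \<in> carrier G" using assms(1,6) by (simp add: group.inv_closed)
  have "\<phi> (\<phi> x g) (inv\<^bsub>G\<^esub> h) = \<phi> x (g \<otimes>\<^bsub>G\<^esub> inv\<^bsub>G\<^esub> h)"
    using assms(2,4,5) ih unfolding right_action_def by auto
  moreover have "\<phi> (\<phi> x h) (inv\<^bsub>G\<^esub> h) = x"
    using assms(1,2,4,6) ih unfolding right_action_def by (auto simp: group.r_inv)
  ultimately have "\<phi> x (g \<otimes>\<^bsub>G\<^esub> inv\<^bsub>G\<^esub> h) = x" using assms(7) by simp
  moreover have "g \<otimes>\<^bsub>G\<^esub> inv\<^bsub>G\<^esub> h \<in> carrier G" using assms(1,5) ih by (simp add: monoid.m_closed group.is_monoid)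
  ultimately have "g \<otimes>\<^bsub>G\<^esub> inv\<^bsub>G\<^esub> h = \<one>\<^bsub>G\<^esub>" using assms(3,4) unfolding principal_action_def by auto
  then show ?thesis using assms(1,5,6) by (metis group.inv_equality group.inv_inv ih)
qed


lemma orbit_chain:
  assumes "group G" "right_action X G \<phi>"
    and P: "\<forall>i<n. \<alpha> i \<in> paths X" and g: "\<forall>i<n - 1. g i \<in> carrier G"
    and c: "\<forall>i<n - 1. \<phi> (\<alpha> i 0) (g i) = \<alpha> (Suc i) 0"
  shows "\<forall>i<n. orbit G \<phi> (\<alpha> i 0) = orbit G \<phi> (\<alpha> 0 0)"
proof (intro allI impI)
  fix i assume "i < n" then show "orbit G \<phi> (\<alpha> i 0) = orbit G \<phi> (\<alpha> 0 0)"
  proof (induction i)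
    case 0 then show ?case by simp
  next
    case (Suc i)
    have "\<alpha> i 0 \<in> topspace X" using P Suc.prems by (intro paths_in_topspace) auto
    then have "orbit G \<phi> (\<alpha> (Suc i) 0) = orbit G \<phi> (\<alpha> i 0)"
      using c g Suc.prems orbit_act[OF assms(1,2)] by (metis Suc_lessE diff_Suc_1)
    then show ?case using Suc by simp
  qed
qed

lemma sec_equiv:
  assumes grp: "group G" and ra: "right_action X G \<phi>" and pa: "principal_action X G \<phi>"
  shows "has_local_section (MGn_space X G \<phi> n) (power_space X n) (eps_tilde n) U \<longleftrightarrow>
         has_local_section (MG_space X G \<phi> n) (power_space X n) (eps n) U"
proof
  let ?T = "subtopology (power_space X n) U"
  assume "has_local_section (MG_space X G \<phi> n) (power_space X n) (eps n) U"
  then obtain s where hs: "continuous_map ?T (MG_space X G \<phi> n) s" and sec: "\<forall>b\<in>U. eps n (s b) = b"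
    unfolding has_local_section_def by blast
  have c1: "continuous_map ?T (product_topology (\<lambda>_. path_space X) {..<n}) (fst \<circ> s)"
    using hs unfolding MG_space_def
    by (intro continuous_map_compose[OF _ continuous_map_fst]) (auto simp: continuous_map_in_subtopology)
  have mem: "fst (s b) \<in> {\<alpha>. \<forall>i<n. \<forall>j<n. orbit G \<phi> (\<alpha> i 0) = orbit G \<phi> (\<alpha> j 0)}"
    if b: "b \<in> topspace ?T" for b
  proof -
    obtain \<alpha> g where sb: "s b = (\<alpha>, g)" by fastforce
    have "s b \<in> topspace (MG_space X G \<phi> n)" using hs b by (auto simp: continuous_map_def)
    then have P: "\<forall>i<n. \<alpha> i \<in> paths X" and gg: "\<forall>i<n - 1. g i \<in> carrier G"
      and c: "\<forall>i<n - 1. \<phi> (\<alpha> i 0) (g i) = \<alpha> (Suc i) 0"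
      unfolding MG_space_def sb by (auto simp: topspace_path_space PiE_iff)
    have eq: "\<forall>i<n. orbit G \<phi> (\<alpha> i 0) = orbit G \<phi> (\<alpha> 0 0)"
      by (rule orbit_chain[OF grp ra P gg c])
    have all: "\<forall>i<n. \<forall>j<n. orbit G \<phi> (\<alpha> i 0) = orbit G \<phi> (\<alpha> j 0)"
    proof (intro allI impI)
      fix i j assume "i < n" "j < n"
      then show "orbit G \<phi> (\<alpha> i 0) = orbit G \<phi> (\<alpha> j 0)" using eq by metis
    qed
    show ?thesis unfolding sb fst_conv mem_Collect_eq by (rule all)
  qed
  have "continuous_map ?T (MGn_space X G \<phi> n) (fst \<circ> s)"
    unfolding MGn_space_def continuous_map_in_subtopology
  proof (intro conjI c1 funcsetI)
    fix b assume "b \<in> topspace ?T"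
    then show "(fst \<circ> s) b \<in> {\<alpha>. \<forall>i<n. \<forall>j<n. orbit G \<phi> (\<alpha> i 0) = orbit G \<phi> (\<alpha> j 0)}"
      unfolding o_def by (rule mem)
  qed
  moreover have "\<forall>b\<in>U. eps_tilde n ((fst \<circ> s) b) = b"
  proof
    fix b assume "b \<in> U"
    then have "eps n (s b) = b" using sec by auto
    then show "eps_tilde n ((fst \<circ> s) b) = b"
      by (cases "s b") (simp add: eps_def eps_tilde_def)
  qed
  ultimately show "has_local_section (MGn_space X G \<phi> n) (power_space X n) (eps_tilde n) U"
    unfolding has_local_section_def by blast
next
  let ?T = "subtopology (power_space X n) U"
  assume "has_local_section (MGn_space X G \<phi> n) (power_space X n) (eps_tilde n) U"
  then obtain s where hs: "continuous_map ?T (MGn_space X G \<phi> n) s" and sec: "\<forall>b\<in>U. eps_tilde n (s b) = b"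
    unfolding has_local_section_def by blast
  have hs1: "continuous_map ?T (product_topology (\<lambda>_. path_space X) {..<n}) s"
    and hsm: "\<And>b. b \<in> topspace ?T \<Longrightarrow> \<forall>i<n. \<forall>j<n. orbit G \<phi> (s b i 0) = orbit G \<phi> (s b j 0)"
    using hs unfolding MGn_space_def continuous_map_in_subtopology by auto
  have sP: "\<And>b i. b \<in> topspace ?T \<Longrightarrow> i < n \<Longrightarrow> s b i \<in> paths X"
    using hs1 unfolding continuous_map_def by (auto simp: topspace_path_space PiE_iff)
  have ev: "continuous_map ?T X (\<lambda>b. s b i 0)" if "i < n" for i
  proof -
    have "continuous_map ?T (path_space X) (\<lambda>b. s b i)"
      using hs1 that by (auto simp: continuous_map_componentwise)
    then show ?thesis using continuous_map_compose[OF _ continuous_map_eval[of 0 X]] by (auto simp: o_def)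
  qed
  define SS where "SS = {(x, \<phi> x g) | x g. x \<in> topspace X \<and> g \<in> carrier G}"
  define th where "th = (\<lambda>(x, y). THE g. g \<in> carrier G \<and> \<phi> x g = y)"
  have thc: "continuous_map (subtopology (prod_topology X X) SS) (discrete_topology (carrier G)) th"
    using pa unfolding principal_action_def SS_def th_def by auto
  have one: "\<And>y. y \<in> topspace X \<Longrightarrow> \<phi> y \<one>\<^bsub>G\<^esub> = y" using ra unfolding right_action_def by auto
  have onec: "\<one>\<^bsub>G\<^esub> \<in> carrier G" using grp by (simp add: group.is_monoid monoid.one_closed)
  have exg: "\<exists>g\<in>carrier G. \<phi> (s b i 0) g = s b (Suc i) 0"
    if b: "b \<in> topspace ?T" and i: "i < n - 1" for b i
  proof -
    have t1: "s b (Suc i) 0 \<in> topspace X" using i by (intro paths_in_topspace sP[OF b]) auto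
    have "s b (Suc i) 0 \<in> orbit G \<phi> (s b (Suc i) 0)"
      unfolding orbit_def using one[OF t1] onec by (metis image_eqI)
    also have "\<dots> = orbit G \<phi> (s b i 0)" using hsm[OF b] i by auto
    finally show ?thesis unfolding orbit_def by auto
  qed
  have thv: "th (s b i 0, s b (Suc i) 0) \<in> carrier G \<and> \<phi> (s b i 0) (th (s b i 0, s b (Suc i) 0)) = s b (Suc i) 0"
    if b: "b \<in> topspace ?T" and i: "i < n - 1" for b i
  proof -
    obtain g where g: "g \<in> carrier G" "\<phi> (s b i 0) g = s b (Suc i) 0" using exg[OF b i] by blast
    have t0: "s b i 0 \<in> topspace X" using i by (intro paths_in_topspace sP[OF b]) auto
    have "th (s b i 0, s b (Suc i) 0) = g"
      unfolding th_def using g act_unique[OF grp ra pa t0] by (auto intro!: the_equality)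
    then show ?thesis using g by simp
  qed
  define gf where "gf = (\<lambda>b. \<lambda>i\<in>{..<n - 1}. th (s b i 0, s b (Suc i) 0))"
  have gfc: "continuous_map ?T (product_topology (\<lambda>_. discrete_topology (carrier G)) {..<n - 1}) gf"
    unfolding continuous_map_componentwise
  proof (intro conjI ballI)
    show "gf ` topspace ?T \<subseteq> extensional {..<n - 1}" unfolding gf_def by auto
    fix k assume k: "k \<in> {..<n - 1}"
    have hk: "continuous_map ?T (subtopology (prod_topology X X) SS) (\<lambda>b. (s b k 0, s b (Suc k) 0))"
      unfolding continuous_map_in_subtopology
    proof
      show "continuous_map ?T (prod_topology X X) (\<lambda>b. (s b k 0, s b (Suc k) 0))"
        using k by (intro continuous_map_pairedI ev) auto
      show "(\<lambda>b. (s b k 0, s b (Suc k) 0)) \<in> topspace ?T \<rightarrow> SS"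
      proof
        fix b assume b: "b \<in> topspace ?T"
        obtain g where g: "g \<in> carrier G" "\<phi> (s b k 0) g = s b (Suc k) 0" using exg[OF b] k by blast
        have t0: "s b k 0 \<in> topspace X" using k by (intro paths_in_topspace sP[OF b]) auto
        show "(s b k 0, s b (Suc k) 0) \<in> SS" unfolding SS_def using g t0 by (metis (mono_tags, lifting) mem_Collect_eq)
      qed
    qed
    have "continuous_map ?T (discrete_topology (carrier G)) (th \<circ> (\<lambda>b. (s b k 0, s b (Suc k) 0)))"
      by (rule continuous_map_compose[OF hk thc])
    then show "continuous_map ?T (discrete_topology (carrier G)) (\<lambda>x. gf x k)"
      unfolding gf_def using k by (simp add: o_def)
  qed
  define s' where "s' = (\<lambda>b. (s b, gf b))"
  have "continuous_map ?T (MG_space X G \<phi> n) s'"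
    unfolding MG_space_def continuous_map_in_subtopology s'_def
  proof
    show "continuous_map ?T (prod_topology (product_topology (\<lambda>_. path_space X) {..<n})
        (product_topology (\<lambda>_. discrete_topology (carrier G)) {..<n - 1})) (\<lambda>b. (s b, gf b))"
      using hs1 gfc by (rule continuous_map_pairedI)
    show "(\<lambda>b. (s b, gf b)) \<in> topspace ?T \<rightarrow> {(\<alpha>, g). \<forall>i<n - 1. \<phi> (\<alpha> i 0) (g i) = \<alpha> (Suc i) 0}"
      using thv unfolding gf_def by auto
  qed
  moreover have "\<forall>b\<in>U. eps n (s' b) = b"
    using sec unfolding s'_def by (simp add: eps_def eps_tilde_def)
  ultimately show "has_local_section (MG_space X G \<phi> n) (power_space X n) (eps n) U"
    unfolding has_local_section_def by blast
qed

theorem mainTheorem4: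
  fixes X :: "'a topology" and G :: "('g, 'm) monoid_scheme"
    and \<phi> :: "'a \<Rightarrow> 'g \<Rightarrow> 'a" and n :: nat
  assumes "Hausdorff_space X" and "path_connected_space X"
    and "locally_path_connected_space X"
    and "group G" and "finite (carrier G)"
    and "right_action X G \<phi>" and "principal_action X G \<phi>"
    and "n \<ge> 2"
  shows "secat (MGn_space X G \<phi> n) (power_space X n) (eps_tilde n) = TC_effv X G \<phi> n"
proof -
  note e = sec_equiv[OF assms(4,6,7)]
  show ?thesis unfolding TC_effv_def secat_def
    by (rule arg_cong[where f=Inf], rule Collect_cong) (simp only: e)
qed

end
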